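(* Let $f(z)=z+\sum_{n\ge 2}a_nz^n\in\mathcal{BT}_{\mathfrak{B}}$ and let $\gamma_1,\gamma_2$ be its logarithmic coefficients. Then $$-\frac{1}{2\sqrt{23}}\le|\gamma_2|-|\gamma_1|\le\frac1{12}.$$ Both inequalities are sharp: the upper bound is attained by $f_2(z)=\int_0^z\sqrt{1+\tanh(t^2)}\,dt$, and the lower bound by the function $f$ with $f(0)=0$, $f'(z)=\sqrt{1+\tanh(\omega(z))}$, where $\omega=\frac{p-1}{p+1}$ and $p(z)=\dfrac{1+\frac{8}{\sqrt{23}}z+z^2}{1-z^2}$.
   Context: $\mathbb{D}=\{z\in\mathbb{C}:|z|<1\}$. $\mathcal{S}$ is the class of univalent analytic functions $f$ on $\mathbb{D}$ normalized by $f(0)=0$, $f'(0)=1$, i.e. $f(z)=z+\sum_{n\ge2}a_nz^n$. For analytic $g,h$ on $\mathbb{D}$, $g\prec h$ means there is an analytic $\omega:\mathbb{D}\to\mathbb{D}$ with $\omega(0)=0$ and $g=h\circ\omega$. Let $\mathfrak{B}(z)=\sqrt{1+\tanh z}$ (principal branch, $\mathfrak{B}(0)=1$). The class $\mathcal{BT}_{\mathfrak{B}}$ is $\{f\in\mathcal{S}: f'(z)\prec \mathfrak{B}(z)\}$. The logarithmic coefficients are defined by $\log\frac{f(z)}{z}=2\sum_{n\ge1}\gamma_nz^n$; explicitly $\gamma_1=\tfrac12 a_2$, $\gamma_2=\tfrac12(a_3-\tfrac12a_2^2)$. *)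

theory Defs
  imports "HOL-Complex_Analysis.Complex_Analysis"
begin

abbreviation unit_disc :: "complex set" where
  "unit_disc \<equiv> ball 0 1"

definition taylor_coeff :: "(complex \<Rightarrow> complex) \<Rightarrow> nat \<Rightarrow> complex" where
  "taylor_coeff f n = (deriv ^^ n) f 0 / of_nat (fact n)"

definition class_S :: "(complex \<Rightarrow> complex) set" where
  "class_S = {f. f holomorphic_on unit_disc \<and> inj_on f unit_disc \<and> f 0 = 0 \<and> deriv f 0 = 1}"

definition subordinate :: "(complex \<Rightarrow> complex) \<Rightarrow> (complex \<Rightarrow> complex) \<Rightarrow> bool" where
  "subordinate g h \<longleftrightarrow> (\<exists>\<omega>. \<omega> holomorphic_on unit_disc \<and> \<omega> ` unit_disc \<subseteq> unit_disc \<and>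
      \<omega> 0 = 0 \<and> (\<forall>z\<in>unit_disc. g z = h (\<omega> z)))"

definition frakB :: "complex \<Rightarrow> complex" where
  "frakB z = csqrt (1 + tanh z)"

definition class_BT :: "(complex \<Rightarrow> complex) set" where
  "class_BT = {f \<in> class_S. subordinate (deriv f) frakB}"

definition log_gamma1 :: "(complex \<Rightarrow> complex) \<Rightarrow> complex" where
  "log_gamma1 f = taylor_coeff f 2 / 2"

definition log_gamma2 :: "(complex \<Rightarrow> complex) \<Rightarrow> complex" where
  "log_gamma2 f = (taylor_coeff f 3 - (taylor_coeff f 2)^2 / 2) / 2"

end

theory Submission
  imports Defs
begin


lemma exp_not_nonpos:
  assumes "\<bar>Im z\<bar> < pi" shows "exp z \<notin> \<real>\<^sub>\<le>\<^sub>0"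
proof
  assume "exp z \<in> \<real>\<^sub>\<le>\<^sub>0"
  then have r: "Re (exp z) \<le> 0" "Im (exp z) = 0" by (auto simp: complex_nonpos_Reals_iff)
  then have "sin (Im z) = 0" by (simp add: Im_exp)
  then have "Im z = 0" using assms sin_eq_0_pi by (metis abs_less_iff minus_less_iff)
  then show False using r by (simp add: Re_exp)
qed

lemma cosh_nz: assumes "norm (w::complex) < 1" shows "cosh w \<noteq> 0"
proof
  assume "cosh w = 0"
  then have "exp w + exp (-w) = 0" by (simp add: cosh_def scaleR_conv_of_real)
  then have "exp w * exp w = -1" by (simp add: exp_minus field_simps add_eq_0_iff)
  then have "exp (2*w) = -1" by (simp add: exp_double power2_eq_square)
  moreover have "\<bar>Im (2*w)\<bar> < pi"
    using abs_Im_le_cmod[of w] assms pi_gt3 by simp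
  ultimately show False using exp_not_nonpos by fastforce
qed

lemma one_tanh: assumes "norm (w::complex) < 1"
  shows "1 + tanh w = 2 * exp (2*w) / (exp (2*w) + 1)"
proof -
  have c: "cosh w \<noteq> 0" using cosh_nz assms .
  have e: "exp (2*w) = exp w * exp w" by (simp add: exp_double power2_eq_square)
  have ne: "exp w * exp w + 1 \<noteq> 0"
    using c by (auto simp: cosh_def scaleR_conv_of_real exp_minus field_simps add_eq_0_iff)
  define E where "E = exp w"
  have E0: "E \<noteq> 0" by (simp add: E_def)
  have ne': "E * E + 1 \<noteq> 0" using ne by (simp add: E_def)
  have ch: "cosh w = (E * E + 1) / (2 * E)"
    using E0 by (simp add: cosh_def scaleR_conv_of_real exp_minus E_def field_simps)
  have "1 + tanh w = (cosh w + sinh w) / cosh w"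
    using c by (simp add: tanh_def add_divide_distrib)
  also have "\<dots> = E / cosh w" by (simp add: cosh_plus_sinh E_def)
  also have "\<dots> = E / ((E * E + 1) / (2 * E))" by (simp add: ch)
  also have "\<dots> = 2 * (E * E) / (E * E + 1)" using E0 ne' by (simp add: divide_divide_eq_right)
  finally have "1 + tanh w = 2 * (E * E) / (E * E + 1)" .
  then show ?thesis unfolding e E_def .
qed

lemma one_tanh_nonpos: assumes "norm (w::complex) < 1"
  shows "1 + tanh w \<notin> \<real>\<^sub>\<le>\<^sub>0"
proof
  assume a: "1 + tanh w \<in> \<real>\<^sub>\<le>\<^sub>0"
  define u where "u = exp (2*w)"
  have "\<bar>Im (2*w)\<bar> < pi" using abs_Im_le_cmod[of w] assms pi_gt3 by simp
  then have u: "u \<notin> \<real>\<^sub>\<le>\<^sub>0" unfolding u_def by (rule exp_not_nonpos)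
  then have u1: "u + 1 \<noteq> 0" "u \<noteq> 0"
    by (auto simp: complex_nonpos_Reals_iff complex_eq_iff)
  from a obtain t where t: "t \<le> 0" "1 + tanh w = of_real t"
    by (auto simp: complex_nonpos_Reals_iff complex_eq_iff intro!: exI[of _ "Re (1 + tanh w)"])
  have "2 * u / (u + 1) = of_real t" using t one_tanh[OF assms] by (simp add: u_def)
  then have "2 * u = of_real t * (u + 1)" using u1 by (simp add: field_simps)
  then have "u * (2 - of_real t) = of_real t" by (simp add: algebra_simps)
  moreover have nz: "(2 - of_real t) \<noteq> (0::complex)"
    using t by (auto simp: complex_eq_iff)
  ultimately have "u = of_real t / (2 - of_real t)" by (simp add: eq_divide_eq)
  then have "u = of_real (t / (2 - t))" by simp
  then show False using u t by (simp add: complex_nonpos_Reals_iff divide_nonpos_pos)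
qed



definition DB :: "complex \<Rightarrow> complex" where
  "DB z = (1 - tanh z ^ 2) / (2 * csqrt (1 + tanh z))"

lemma tanh_deriv: "cosh z \<noteq> 0 \<Longrightarrow> (tanh has_field_derivative 1 - tanh z ^ 2) (at (z::complex))"
  unfolding tanh_def[abs_def] by (auto intro!: derivative_eq_intros simp: power2_eq_square field_split_simps)

lemma frakB_has_deriv:
  assumes "norm z < 1" shows "(frakB has_field_derivative DB z) (at z)"
proof -
  have "((\<lambda>z. csqrt (1 + tanh z)) has_field_derivative ((0 + (1 - tanh z ^ 2)) / (2 * csqrt (1 + tanh z)))) (at z)"
    by (intro derivative_intros has_field_derivative_csqrt' tanh_deriv cosh_nz one_tanh_nonpos assms)
  then show ?thesis unfolding frakB_def[abs_def] DB_def by simp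
qed

lemma frakB_holo: "frakB holomorphic_on unit_disc"
  unfolding holomorphic_on_def
  using frakB_has_deriv field_differentiable_at_within field_differentiable_def by fastforce

lemma deriv_frakB: "norm z < 1 \<Longrightarrow> deriv frakB z = DB z"
  using frakB_has_deriv DERIV_imp_deriv by blast

lemma frakB_0: "frakB 0 = 1" by (simp add: frakB_def)

lemma deriv_frakB_0: "deriv frakB 0 = 1/2"
  by (simp add: deriv_frakB DB_def)

lemma deriv2_frakB_0: "deriv (deriv frakB) 0 = -1/4"
proof -
  have ev: "eventually (\<lambda>z. deriv frakB z = DB z) (nhds 0)"
    using eventually_nhds_in_open[of unit_disc 0] deriv_frakB
    by (auto elim!: eventually_mono)
  have "(DB has_field_derivative (-1/4)) (at 0)"
    unfolding DB_def[abs_def]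
    by (auto intro!: derivative_eq_intros has_field_derivative_csqrt' cosh_nz one_tanh_nonpos)
  then have "deriv DB 0 = -1/4" by (rule DERIV_imp_deriv)
  then show ?thesis using deriv_cong_ev[OF ev refl] by simp
qed

lemma Re_frakB_pos: "norm w < 1 \<Longrightarrow> Re (frakB w) > 0"
proof -
  assume w: "norm w < 1"
  have n: "1 + tanh w \<notin> \<real>\<^sub>\<le>\<^sub>0" by (rule one_tanh_nonpos[OF w])
  show ?thesis
  proof (rule ccontr)
    assume "\<not> Re (frakB w) > 0"
    then have r: "Re (csqrt (1 + tanh w)) = 0" using csqrt_principal[of "1 + tanh w"]
      by (auto simp: frakB_def)
    define c where "c = csqrt (1 + tanh w)"
    have r': "Re c = 0" using r by (simp add: c_def)
    have "1 + tanh w = c^2" by (simp add: c_def)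
    also have "c^2 = of_real (- (Im c * Im c))"
      using r' by (simp add: complex_eq_iff power2_eq_square)
    finally have "1 + tanh w \<in> \<real>\<^sub>\<le>\<^sub>0"
      by (simp add: complex_nonpos_Reals_iff)
    with n show False by simp
  qed
qed



lemma disc_ev: "z \<in> unit_disc \<Longrightarrow> (\<forall>z'\<in>unit_disc. P z') \<Longrightarrow> eventually P (nhds z)"
  using eventually_nhds_in_open[of unit_disc z] by (auto elim!: eventually_mono)

lemma factor_deriv:
  assumes holg: "g holomorphic_on unit_disc" and wg: "\<forall>z\<in>unit_disc. w z = z * g z"
  shows "deriv w 0 = g 0" and "deriv (deriv w) 0 = 2 * deriv g 0"
proof -
  have dg: "(g has_field_derivative deriv g z) (at z)" if "z \<in> unit_disc" for z
    using holomorphic_derivI[OF holg open_ball that] .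
  have ddg: "(deriv g has_field_derivative deriv (deriv g) z) (at z)" if "z \<in> unit_disc" for z
    using holomorphic_derivI[OF holomorphic_deriv[OF holg open_ball] open_ball that] .
  have dw: "deriv w z = g z + z * deriv g z" if z: "z \<in> unit_disc" for z
  proof -
    have "deriv w z = deriv (\<lambda>z. z * g z) z"
      by (rule deriv_cong_ev[OF disc_ev[OF z] refl]) (use wg in auto)
    also have "\<dots> = g z + z * deriv g z"
      by (rule DERIV_imp_deriv) (auto intro!: derivative_eq_intros dg z)
    finally show ?thesis .
  qed
  show "deriv w 0 = g 0" using dw[of 0] by simp
  have "deriv (deriv w) 0 = deriv (\<lambda>z. g z + z * deriv g z) 0"
    by (rule deriv_cong_ev[OF disc_ev[of 0] refl]) (use dw in auto)
  also have "\<dots> = 2 * deriv g 0"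
    by (rule DERIV_imp_deriv) (auto intro!: derivative_eq_intros dg ddg)
  finally show "deriv (deriv w) 0 = 2 * deriv g 0" .
qed

lemma mobius_lt:
  assumes a: "norm (a::complex) < 1" and b: "norm b < 1"
  shows "norm ((a - b) / (1 - cnj b * a)) < 1"
proof -
  have id: "norm (1 - cnj b * a)^2 - norm (a - b)^2 = (1 - norm a^2) * (1 - norm b^2)"
    unfolding cmod_power2 by (simp add: power2_eq_square algebra_simps)
  have "norm a ^2 < 1" "norm b^2 < 1" using a b by (auto simp: power_less_one_iff abs_less_iff)
  then have "(1 - norm a^2) * (1 - norm b^2) > 0" by simp
  then have "norm (a - b)^2 < norm (1 - cnj b * a)^2" using id by simp
  then have lt: "norm (a - b) < norm (1 - cnj b * a)" by (rule power2_less_imp_less) simp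
  then have "norm (1 - cnj b * a) > 0" by (metis le_less_trans norm_ge_zero)
  then show ?thesis using lt by (simp add: norm_divide)
qed



lemma schwarz2:
  assumes holw: "w holomorphic_on unit_disc" and w0: "w 0 = 0"
    and no: "\<And>z. norm z < 1 \<Longrightarrow> norm (w z) < 1"
  shows "norm (deriv w 0) \<le> 1" and "norm (deriv (deriv w) 0 / 2) \<le> 1 - norm (deriv w 0)^2"
proof -
  have S1: "norm (w z) \<le> norm z" if "norm z < 1" for z
    using Schwarz_Lemma(1)[OF holw w0, of z] no that by blast
  have S2': "norm (deriv w 0) \<le> 1"
    using Schwarz_Lemma(2)[OF holw w0, of 0] no by simp
  have S3: "\<exists>\<alpha>. (\<forall>z. norm z < 1 \<longrightarrow> w z = \<alpha> * z) \<and> norm \<alpha> = 1"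
    if "(\<exists>z. norm z < 1 \<and> z \<noteq> 0 \<and> norm (w z) = norm z) \<or> norm (deriv w 0) = 1"
    using Schwarz_Lemma(3)[OF holw w0, of 0] no that by simp
  show "norm (deriv w 0) \<le> 1" using S2' .
  define g where "g = (\<lambda>z. if z = 0 then deriv w 0 else (w z - w 0) / (z - 0))"
  have holg: "g holomorphic_on unit_disc" unfolding g_def
    by (rule pole_lemma[OF holw]) simp
  have wg: "\<forall>z\<in>unit_disc. w z = z * g z" by (auto simp: g_def w0)
  note F = factor_deriv[OF holg wg]
  have g0: "g 0 = deriv w 0" by (simp add: g_def)
  have c2: "deriv (deriv w) 0 / 2 = deriv g 0" using F(2) by simp
  show "norm (deriv (deriv w) 0 / 2) \<le> 1 - norm (deriv w 0)^2"
  proof (cases "(\<exists>z. norm z < 1 \<and> z \<noteq> 0 \<and> norm (w z) = norm z) \<or> norm (deriv w 0) = 1")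
    case True
    then obtain \<alpha> where al: "\<forall>z. norm z < 1 \<longrightarrow> w z = \<alpha> * z" "norm \<alpha> = 1"
      using S3 by blast
    have "deriv w 0 = deriv (\<lambda>z. \<alpha> * z) 0"
      by (rule deriv_cong_ev[OF disc_ev[of 0] refl]) (use al in auto)
    then have dw: "deriv w 0 = \<alpha>" by simp
    have "deriv g 0 = deriv (\<lambda>z. \<alpha>) 0"
      by (rule deriv_cong_ev[OF disc_ev[of 0] refl]) (use al dw in \<open>auto simp: g_def w0\<close>)
    then have "deriv g 0 = 0" by simp
    then show ?thesis using c2 dw al by simp
  next
    case False
    have gl: "norm (g z) < 1" if z: "norm z < 1" for z
    proof (cases "z = 0")
      case True then show ?thesis using False S2' g0 by auto
    next
      case nz: False
      have "norm (w z) \<le> norm z" using S1[OF z] .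
      moreover have "norm (w z) \<noteq> norm z" using False z nz by blast
      ultimately have "norm (w z) < norm z" by simp
      then show ?thesis using nz by (simp add: g_def w0 norm_divide divide_less_eq)
    qed
    define c where "c = g 0"
    have cl: "norm c < 1" using gl[of 0] by (simp add: c_def)
    have den: "1 - cnj c * g z \<noteq> 0" if "norm z < 1" for z
    proof
      assume "1 - cnj c * g z = 0"
      then have "cnj c * g z = 1" by simp
      then have "norm c * norm (g z) = 1" by (metis complex_mod_cnj norm_mult norm_one)
      moreover have "norm c * norm (g z) < 1"
        using cl gl[OF that] by (metis mult_strict_mono' norm_ge_zero mult_1_right)
      ultimately show False by simp
    qed
    define \<phi> where "\<phi> = (\<lambda>z. (g z - c) / (1 - cnj c * g z))"
    have hol\<phi>: "\<phi> holomorphic_on unit_disc" unfolding \<phi>_def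
      by (intro holomorphic_intros holg) (use den in auto)
    have \<phi>0: "\<phi> 0 = 0" by (simp add: \<phi>_def c_def)
    have \<phi>l: "norm (\<phi> z) < 1" if "norm z < 1" for z
      unfolding \<phi>_def using mobius_lt[OF gl[OF that] cl] .
    have S2: "norm (deriv \<phi> 0) \<le> 1" using Schwarz_Lemma(2)[OF hol\<phi> \<phi>0 \<phi>l, of 0] by simp
    have dg0: "(g has_field_derivative deriv g 0) (at 0)"
      using holomorphic_derivI[OF holg open_ball, of 0] by simp
    have cc: "cnj c * c = of_real (norm c ^ 2)"
      by (metis complex_norm_square mult.commute of_real_power)
    have nc: "1 - norm c ^ 2 > 0" using cl by (simp add: power_less_one_iff abs_less_iff)
    have gc: "g 0 = c" by (simp add: c_def)
    have d0: "1 - cnj c * c \<noteq> 0" using den[of 0] gc by simp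
    have n1: "((\<lambda>z. g z - c) has_field_derivative deriv g 0 - 0) (at 0)"
      by (rule DERIV_diff[OF dg0 DERIV_const])
    have n2: "((\<lambda>z. 1 - cnj c * g z) has_field_derivative 0 - cnj c * deriv g 0) (at 0)"
      by (rule DERIV_diff[OF DERIV_const DERIV_cmult[OF dg0]])
    have "(\<phi> has_field_derivative ((deriv g 0 - 0) * (1 - cnj c * g 0) - (g 0 - c) * (0 - cnj c * deriv g 0))
          / ((1 - cnj c * g 0) * (1 - cnj c * g 0))) (at 0)"
      unfolding \<phi>_def by (rule DERIV_divide[OF n1 n2]) (use d0 gc in simp)
    moreover have "((deriv g 0 - 0) * (1 - cnj c * g 0) - (g 0 - c) * (0 - cnj c * deriv g 0))
          / ((1 - cnj c * g 0) * (1 - cnj c * g 0)) = deriv g 0 / (1 - cnj c * c)"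
      using d0 gc by simp
    ultimately have "(\<phi> has_field_derivative deriv g 0 / (1 - cnj c * c)) (at 0)" by simp
    then have "deriv \<phi> 0 = deriv g 0 / (1 - cnj c * c)" by (rule DERIV_imp_deriv)
    also have "\<dots> = deriv g 0 / of_real (1 - norm c ^ 2)" using cc by simp
    finally have e: "deriv \<phi> 0 = deriv g 0 / of_real (1 - norm c ^ 2)" .
    have nrm: "norm (of_real (1 - norm c^2) :: complex) = 1 - norm c^2"
      by (simp only: norm_of_real) (use nc in simp)
    have "norm (deriv \<phi> 0) = norm (deriv g 0) / (1 - norm c^2)"
      unfolding e by (simp only: norm_divide nrm)
    then have "norm (deriv g 0) = norm (deriv \<phi> 0) * (1 - norm c ^ 2)"
      using nc by (simp add: field_simps)
    also have "\<dots> \<le> 1 * (1 - norm c ^ 2)" using S2 nc by (intro mult_right_mono) auto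
    finally show ?thesis using c2 g0 by (simp add: c_def)
  qed
qed



lemma coeffs:
  assumes holf: "f holomorphic_on unit_disc" and holw: "w holomorphic_on unit_disc"
    and w0: "w 0 = 0" and wd: "\<And>z. norm z < 1 \<Longrightarrow> norm (w z) < 1"
    and fd: "\<forall>z\<in>unit_disc. deriv f z = frakB (w z)"
  shows "deriv f 0 = 1"
    and "taylor_coeff f 2 = deriv w 0 / 4"
    and "taylor_coeff f 3 = (deriv (deriv w) 0 / 2 - (deriv w 0)^2 / 4) / 6"
proof -
  show "deriv f 0 = 1" using fd w0 frakB_0 by simp
  have dw: "(w has_field_derivative deriv w z) (at z)" if "z \<in> unit_disc" for z
    using holomorphic_derivI[OF holw open_ball that] .
  have ddw: "(deriv w has_field_derivative deriv (deriv w) z) (at z)" if "z \<in> unit_disc" for z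
    using holomorphic_derivI[OF holomorphic_deriv[OF holw open_ball] open_ball that] .
  have ddB: "(deriv frakB has_field_derivative deriv (deriv frakB) z) (at z)" if "z \<in> unit_disc" for z
    using holomorphic_derivI[OF holomorphic_deriv[OF frakB_holo open_ball] open_ball that] .
  have d2: "deriv (deriv f) z = deriv frakB (w z) * deriv w z" if z: "z \<in> unit_disc" for z
  proof -
    have "deriv (deriv f) z = deriv (\<lambda>z. frakB (w z)) z"
      by (rule deriv_cong_ev[OF disc_ev[OF z] refl]) (use fd in auto)
    also have "\<dots> = deriv frakB (w z) * deriv w z"
    proof (rule DERIV_imp_deriv)
      have wz: "norm (w z) < 1" using wd z by simp
      show "((\<lambda>z. frakB (w z)) has_field_derivative deriv frakB (w z) * deriv w z) (at z)"
        using DERIV_chain2[OF frakB_has_deriv[OF wz] dw[OF z]] deriv_frakB[OF wz] by simp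
    qed
    finally show ?thesis .
  qed
  have "(deriv ^^ 2) f 0 = deriv (deriv f) 0" by (simp add: numeral_2_eq_2)
  also have "\<dots> = deriv w 0 / 2" using d2[of 0] w0 deriv_frakB_0 by simp
  finally show "taylor_coeff f 2 = deriv w 0 / 4" by (simp add: taylor_coeff_def field_simps)
  have "(deriv ^^ 3) f 0 = deriv (deriv (deriv f)) 0" by (simp add: numeral_3_eq_3)
  also have "\<dots> = deriv (\<lambda>z. deriv frakB (w z) * deriv w z) 0"
    by (rule deriv_cong_ev[OF disc_ev[of 0] refl]) (use d2 in auto)
  also have "\<dots> = deriv (deriv frakB) 0 * deriv w 0 * deriv w 0 + deriv frakB 0 * deriv (deriv w) 0"
  proof (rule DERIV_imp_deriv)
    have c: "((\<lambda>z. deriv frakB (w z)) has_field_derivative deriv (deriv frakB) 0 * deriv w 0) (at 0)"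
    proof -
      have b0: "(deriv frakB has_field_derivative deriv (deriv frakB) 0) (at (w 0))" using ddB[of 0] w0 by simp
      have w0': "(w has_field_derivative deriv w 0) (at 0)" using dw[of 0] by simp
      show ?thesis using DERIV_chain2[OF b0 w0'] by simp
    qed
    show "((\<lambda>z. deriv frakB (w z) * deriv w z) has_field_derivative
        deriv (deriv frakB) 0 * deriv w 0 * deriv w 0 + deriv frakB 0 * deriv (deriv w) 0) (at 0)"
    proof -
      have w1: "(deriv w has_field_derivative deriv (deriv w) 0) (at 0)" using ddw[of 0] by simp
      show ?thesis using DERIV_mult[OF c w1] w0 by (simp add: algebra_simps)
    qed
  qed
  also have "\<dots> = deriv (deriv w) 0 / 2 - (deriv w 0)^2 / 4"
    by (simp add: deriv2_frakB_0 deriv_frakB_0 power2_eq_square)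
  finally show "taylor_coeff f 3 = (deriv (deriv w) 0 / 2 - (deriv w 0)^2 / 4) / 6"
    by (simp add: taylor_coeff_def numeral_3_eq_3)
qed

lemma gammas:
  assumes "taylor_coeff f 2 = c1 / 4" "taylor_coeff f 3 = (c2 - c1^2 / 4) / 6"
  shows "log_gamma1 f = c1 / 8" "log_gamma2 f = c2 / 12 - 7 * c1^2 / 192"
proof -
  show "log_gamma1 f = c1 / 8" unfolding log_gamma1_def assms by simp
  show "log_gamma2 f = c2 / 12 - 7 * c1^2 / 192" unfolding log_gamma2_def assms
    by (simp add: field_simps power2_eq_square)
qed

lemma ineq:
  fixes c1 c2 :: complex
  assumes "norm c1 \<le> 1" "norm c2 \<le> 1 - norm c1 ^ 2"
  shows "- 1 / (2 * sqrt 23) \<le> norm (c2 / 12 - 7 * c1^2 / 192) - norm (c1 / 8)"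
    and "norm (c2 / 12 - 7 * c1^2 / 192) - norm (c1 / 8) \<le> 1 / 12"
proof -
  define x where "x = norm c1"
  have x0: "0 \<le> x" "x \<le> 1" using assms by (auto simp: x_def)
  have n1: "norm (c1 / 8) = x / 8" by (simp add: x_def norm_divide)
  have n2: "norm (7 * c1^2 / 192) = 7 * x^2 / 192" by (simp add: x_def norm_divide norm_mult norm_power)
  have n3: "norm (c2 / 12) \<le> (1 - x^2) / 12" using assms by (simp add: x_def norm_divide)
  have up: "norm (c2 / 12 - 7 * c1^2 / 192) \<le> (1 - x^2) / 12 + 7 * x^2 / 192"
    using norm_triangle_ineq4[of "c2/12" "7 * c1^2 / 192"] n2 n3 by linarith
  have lo: "norm (c2 / 12 - 7 * c1^2 / 192) \<ge> 7 * x^2 / 192 - (1 - x^2) / 12"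
    using norm_triangle_ineq3[of "7 * c1^2 / 192" "c2/12"] n2 n3 norm_minus_commute[of "c2 / 12" "7 * c1^2 / 192"] by linarith
  show "norm (c2 / 12 - 7 * c1^2 / 192) - norm (c1 / 8) \<le> 1 / 12"
    proof -
    have h: "(1 - x^2) / 12 + 7 * x^2 / 192 = 1/12 - 9 * x^2 / 192" by (simp add: field_simps)
    show ?thesis using up n1 x0 zero_le_power2[of x] unfolding h by linarith
  qed
  define s where "s = sqrt 23"
  have s3: "s > 3" unfolding s_def by (rule real_less_rsqrt) simp
  have s: "s > 0" "s^2 = 23" "s > 3" using s3 unfolding s_def by auto
  have key: "- 1 / (2 * s) \<le> norm (c2 / 12 - 7 * c1^2 / 192) - x / 8"
  proof (cases "x \<le> 4 / s")
    case True
    then have "x * s \<le> 4" using s by (simp add: field_simps)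
    then have "- 1 / (2 * s) \<le> - x / 8" using s by (simp add: field_simps)
    then show ?thesis using norm_ge_zero[of "c2 / 12 - 7 * c1^2 / 192"] by linarith
  next
    case False
    then have xs: "x * s > 4" using s by (simp add: field_simps)
    have "(x * s - 4) * (23 * x * s - 24 * s + 92) \<ge> 0"
    proof (rule mult_nonneg_nonneg)
      show "x * s - 4 \<ge> 0" using xs by simp
      have "23 * x * s > 92" using xs by linarith
      moreover have "184 - 24 * s \<ge> 0"
      proof -
        have "s^2 \<le> (184/24)^2" using s by (simp add: power2_eq_square)
        then have "s \<le> 184/24" by (rule power2_le_imp_le) simp
        then show ?thesis by simp
      qed
      ultimately show "23 * x * s - 24 * s + 92 \<ge> 0" by linarith
    qed
    moreover have "s * (23 * x^2 * s - 24 * x * s - 16 * s + 96) - (x * s - 4) * (23 * x * s - 24 * s + 92) = 368 - 16 * s^2"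
      by (simp add: algebra_simps power2_eq_square)
    ultimately have "s * (23 * x^2 * s - 24 * x * s - 16 * s + 96) \<ge> 0" using s(2) by simp
    then have q: "23 * x^2 * s - 24 * x * s - 16 * s + 96 \<ge> 0" using s(1) by (simp add: zero_le_mult_iff)
    have eq: "7 * x^2 / 192 - (1 - x^2) / 12 - x / 8 + 1 / (2 * s) = (23 * x^2 * s - 24 * x * s - 16 * s + 96) / (192 * s)"
      using s(1) by (simp add: field_simps)
    have "(23 * x^2 * s - 24 * x * s - 16 * s + 96) / (192 * s) \<ge> 0" using q s(1) by simp
    then have "- 1 / (2 * s) \<le> 7 * x^2 / 192 - (1 - x^2) / 12 - x / 8"
      using eq by linarith
    then show ?thesis using lo by linarith
  qed
  then show "- 1 / (2 * sqrt 23) \<le> norm (c2 / 12 - 7 * c1^2 / 192) - norm (c1 / 8)"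
    using n1 by (simp add: s_def)
qed



lemma inj_Re_pos:
  assumes S: "convex S" and d: "\<And>z. z \<in> S \<Longrightarrow> (f has_field_derivative f' z) (at z)"
    and p: "\<And>z. z \<in> S \<Longrightarrow> Re (f' z) > 0"
  shows "inj_on f S"
proof (rule inj_onI, rule ccontr)
  fix a b assume a: "a \<in> S" and b: "b \<in> S" and e: "f a = f b" and ne: "a \<noteq> b"
  have seg: "closed_segment a b \<subseteq> S" using S a b by (simp add: closed_segment_subset)
  have "\<exists>u. u \<in> closed_segment a b \<and> Re (f b / (b - a)) - Re (f a / (b - a)) = Re (f' u / (b - a) * (b - a))"
  proof (rule complex_mvt_line)
    fix u assume "u \<in> closed_segment a b"
    then have "u \<in> S" using seg by auto
    then show "((\<lambda>z. f z / (b - a)) has_field_derivative f' u / (b - a)) (at u)"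
      using DERIV_cdivide[OF d] by blast
  qed
  then obtain u where u: "u \<in> closed_segment a b" and
    eq: "Re (f b / (b - a)) - Re (f a / (b - a)) = Re (f' u / (b - a) * (b - a))" by blast
  have "Re (f' u) = 0" using eq e ne by simp
  moreover have "Re (f' u) > 0" using p u seg by auto
  ultimately show False by simp
qed

lemma exists_BT:
  assumes holw: "w holomorphic_on unit_disc" and w0: "w 0 = 0"
    and wd: "\<And>z. norm z < 1 \<Longrightarrow> norm (w z) < 1"
  shows "\<exists>f\<in>class_BT. f holomorphic_on unit_disc \<and> (\<forall>z\<in>unit_disc. deriv f z = frakB (w z))"
proof -
  have sub: "w ` unit_disc \<subseteq> unit_disc" using wd by auto
  have holh: "(\<lambda>z. frakB (w z)) holomorphic_on unit_disc"
    using holomorphic_on_compose_gen[OF holw frakB_holo sub] by (simp add: o_def)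
  obtain g where g: "\<And>x. x \<in> unit_disc \<Longrightarrow> (g has_field_derivative frakB (w x)) (at x within unit_disc)"
    using holomorphic_convex_primitive'[OF convex_ball open_ball holh] by blast
  define f where "f = (\<lambda>z. g z - g 0)"
  have df: "(f has_field_derivative frakB (w x)) (at x)" if x: "x \<in> unit_disc" for x
  proof -
    have "(g has_field_derivative frakB (w x)) (at x)"
      using g[OF x] at_within_open[OF x open_ball] by simp
    then show ?thesis unfolding f_def using DERIV_diff[OF _ DERIV_const] by fastforce
  qed
  have holf: "f holomorphic_on unit_disc"
    unfolding holomorphic_on_def
    using df field_differentiable_at_within field_differentiable_def by fastforce
  have dfe: "\<forall>z\<in>unit_disc. deriv f z = frakB (w z)" using df DERIV_imp_deriv by blast
  have f0: "f 0 = 0" by (simp add: f_def)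
  have d0: "deriv f 0 = 1" using dfe w0 frakB_0 by simp
  have inj: "inj_on f unit_disc"
  proof (rule inj_Re_pos[OF convex_ball df])
    fix z assume "z \<in> unit_disc"
    then show "Re (frakB (w z)) > 0" using Re_frakB_pos wd by simp
  qed auto
  have "f \<in> class_BT"
    unfolding class_BT_def class_S_def subordinate_def
    using holf inj f0 d0 holw sub w0 dfe by blast
  then show ?thesis using holf dfe by blast
qed



lemma part1:
  assumes "f \<in> class_BT"
  shows "- 1 / (2 * sqrt 23) \<le> cmod (log_gamma2 f) - cmod (log_gamma1 f) \<and>
         cmod (log_gamma2 f) - cmod (log_gamma1 f) \<le> 1 / 12"
proof -
  from assms obtain w where holf: "f holomorphic_on unit_disc" and holw: "w holomorphic_on unit_disc"
    and sub: "w ` unit_disc \<subseteq> unit_disc" and w0: "w 0 = 0" and fd: "\<forall>z\<in>unit_disc. deriv f z = frakB (w z)"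
    unfolding class_BT_def class_S_def subordinate_def by blast
  have wd: "norm (w z) < 1" if "norm z < 1" for z using sub that by (metis image_subset_iff mem_ball_0)
  note C = coeffs[OF holf holw w0 wd fd]
  define c1 where "c1 = deriv w 0"
  define c2 where "c2 = deriv (deriv w) 0 / 2"
  have "taylor_coeff f 2 = c1 / 4" "taylor_coeff f 3 = (c2 - c1^2 / 4) / 6"
    using C by (simp_all add: c1_def c2_def)
  note Gm = gammas[OF this]
  note Sw = schwarz2[OF holw w0 wd]
  have "norm c1 \<le> 1" "norm c2 \<le> 1 - norm c1 ^ 2" using Sw by (simp_all add: c1_def c2_def)
  note I = ineq[OF this]
  show ?thesis unfolding Gm using I by simp
qed

lemma part2: "\<exists>f\<in>class_BT. cmod (log_gamma2 f) - cmod (log_gamma1 f) = 1 / 12"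
proof -
  define w where "w = (\<lambda>z::complex. z * z)"
  have holw: "w holomorphic_on unit_disc" unfolding w_def by (intro holomorphic_intros)
  have wd: "norm (w z) < 1" if "norm z < 1" for z
  proof -
    have "norm z * norm z < 1 * 1" by (rule mult_strict_mono) (use that in auto)
    then show ?thesis by (simp add: w_def norm_mult)
  qed
  obtain f where f: "f \<in> class_BT" "f holomorphic_on unit_disc" "\<forall>z\<in>unit_disc. deriv f z = frakB (w z)"
    using exists_BT[OF holw _ wd] by (auto simp: w_def)
  have w0: "w 0 = 0" by (simp add: w_def)
  note C = coeffs[OF f(2) holw w0 wd f(3)]
  have hid: "(\<lambda>z::complex. z) holomorphic_on unit_disc" by (intro holomorphic_intros)
  note FD = factor_deriv[OF hid, of w]
  have d1: "deriv w 0 = 0" and d2: "deriv (deriv w) 0 = 2" using FD by (simp_all add: w_def)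
  have t3: "taylor_coeff f 3 = 1 / 6" using C(3) d1 d2 by simp
  have "taylor_coeff f 2 = 0 / 4" "taylor_coeff f 3 = (1 - 0^2 / 4) / 6"
    using C(2) d1 t3 by simp_all
  note Gm = gammas[OF this]
  have "cmod (log_gamma2 f) - cmod (log_gamma1 f) = 1 / 12" unfolding Gm by (simp add: norm_divide)
  then show ?thesis using f(1) by blast
qed

lemma part3: "\<exists>f\<in>class_BT. cmod (log_gamma2 f) - cmod (log_gamma1 f) = - 1 / (2 * sqrt 23)"
proof -
  define b :: real where "b = 4 / sqrt 23"
  have b2: "b^2 = 16 / 23" by (simp add: b_def power_divide)
  have bp: "b > 0" by (simp add: b_def)
  have b1: "b < 1"
  proof -
    have "b^2 < 1^2" using b2 by simp
    then show ?thesis using bp by (simp add: power_less_imp_less_base)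
  qed
  define g where "g = (\<lambda>z::complex. (z + of_real b) / (1 + of_real b * z))"
  define w where "w = (\<lambda>z::complex. z * g z)"
  have den: "1 + of_real b * z \<noteq> 0" if "norm z < 1" for z :: complex
  proof
    assume "1 + of_real b * z = 0"
    then have "norm (of_real b * z) = 1" by (metis add_eq_0_iff norm_minus_cancel norm_one)
    moreover have "b * norm z < 1 * 1" by (rule mult_strict_mono) (use that b1 in auto)
    then have "norm (of_real b * z) < 1" using bp by (simp add: norm_mult)
    ultimately show False by simp
  qed
  have holg: "g holomorphic_on unit_disc" unfolding g_def
    by (intro holomorphic_intros) (use den in auto)
  have holw: "w holomorphic_on unit_disc" unfolding w_def by (intro holomorphic_intros holg)
  have gl: "norm (g z) < 1" if "norm z < 1" for z
  proof -
    have "norm ((z - of_real (-b)) / (1 - cnj (of_real (-b)) * z)) < 1"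
      by (rule mobius_lt) (use that bp b1 in auto)
    then show ?thesis by (simp add: g_def)
  qed
  have wd: "norm (w z) < 1" if "norm z < 1" for z
  proof -
    have "norm (w z) = norm z * norm (g z)" by (simp add: w_def norm_mult)
    also have "\<dots> < 1 * 1" by (rule mult_strict_mono) (use that gl[OF that] in auto)
    finally show ?thesis by simp
  qed
  have w0: "w 0 = 0" by (simp add: w_def)
  obtain f where f: "f \<in> class_BT" "f holomorphic_on unit_disc" "\<forall>z\<in>unit_disc. deriv f z = frakB (w z)"
    using exists_BT[OF holw w0 wd] by auto
  note C = coeffs[OF f(2) holw w0 wd f(3)]
  note FD = factor_deriv[OF holg, of w]
  have dg: "(g has_field_derivative (1 - of_real b * of_real b)) (at 0)"
    unfolding g_def by (auto intro!: derivative_eq_intros)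
  have d1: "deriv w 0 = of_real b" and d2: "deriv (deriv w) 0 = 2 * (1 - of_real b * of_real b)"
    using FD DERIV_imp_deriv[OF dg] by (simp_all add: w_def g_def)
  have "taylor_coeff f 2 = of_real b / 4"
    "taylor_coeff f 3 = ((1 - of_real b * of_real b) - (of_real b)^2 / 4) / 6"
    using C d1 d2 by simp_all
  then have "taylor_coeff f 3 = ((1 - (of_real b)^2) - (of_real b)^2 / 4) / 6"
    by (simp add: power2_eq_square)
  note Gm = gammas[OF \<open>taylor_coeff f 2 = of_real b / 4\<close> this]
  have bb: "(of_real b :: complex)^2 = 16 / 23" using b2 by (metis of_real_power of_real_divide of_real_numeral)
  have "log_gamma2 f = 0" using Gm(2) bb by simp
  moreover have "cmod (log_gamma1 f) = b / 8" unfolding Gm(1) using bp by (simp add: norm_divide)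
  ultimately have "cmod (log_gamma2 f) - cmod (log_gamma1 f) = - 1 / (2 * sqrt 23)"
    by (simp add: b_def)
  then show ?thesis using f(1) by blast
qed

theorem theorem7p1:
  shows "(\<forall>f\<in>class_BT.
            - 1 / (2 * sqrt 23) \<le> cmod (log_gamma2 f) - cmod (log_gamma1 f) \<and>
            cmod (log_gamma2 f) - cmod (log_gamma1 f) \<le> 1 / 12)
       \<and> (\<exists>f\<in>class_BT. cmod (log_gamma2 f) - cmod (log_gamma1 f) = 1 / 12)
       \<and> (\<exists>f\<in>class_BT. cmod (log_gamma2 f) - cmod (log_gamma1 f) = - 1 / (2 * sqrt 23))"
  using part1 part2 part3 by blast

end
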